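(* Let $k\in\mathbb{N}$ and $0\le i<k$. Define $\mathrm{bit}_i:\mathbb{Z}_{2^k}\to\{-1,1\}$ by $\mathrm{bit}_i(x)=(-1)^{x_i}$, where $x=\sum_{j=0}^{k-1}x_j2^j$ with $x_j\in\{0,1\}$. Let $\alpha\in\mathbb{Z}_{2^k}$. Then $\widehat{\mathrm{bit}_i}(\alpha)=0$ unless $\alpha$ is an odd multiple of $2^{k-i-1}$, in which case $|\widehat{\mathrm{bit}_i}(\alpha)|=O(2^{k-i}/|\alpha|_{2^k})$, i.e. $|\widehat{\mathrm{bit}_i}(\alpha)|\le c\,2^{k-i}/|\alpha|_{2^k}$ for an absolute constant $c$ independent of $k,i,\alpha$.
   Context: $\mathbb{Z}_N=\{0,\dots,N-1\}$ with addition mod $N$. For $f:\mathbb{Z}_N\to\mathbb{C}$, $\widehat f(\alpha)=\frac1N\sum_{x\in\mathbb{Z}_N}f(x)\exp(-2\pi i\alpha x/N)$. For $N\in\mathbb{N}$ and $x\in\mathbb{R}$, $|x|_N=\min\{|x-Nz|:z\in\mathbb{Z}\}$. *)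

theory Defs
  imports "HOL-Analysis.Analysis"
begin

definition fourier :: "nat \<Rightarrow> (nat \<Rightarrow> complex) \<Rightarrow> nat \<Rightarrow> complex" where
  "fourier N f \<alpha> = (1 / of_nat N) *
     (\<Sum>x<N. f x * exp (- 2 * of_real pi * \<i> * of_nat \<alpha> * of_nat x / of_nat N))"

definition absN :: "nat \<Rightarrow> real \<Rightarrow> real" where
  "absN N x = (INF z::int. \<bar>x - real N * real_of_int z\<bar>)"

definition bitfun :: "nat \<Rightarrow> nat \<Rightarrow> complex" where
  "bitfun i x = (-1) ^ (x div 2 ^ i mod 2)"

end

theory Submission
  imports Defs
begin

lemma sin_lower:
  fixes s :: real assumes "0 \<le> s" "s \<le> pi/2" shows "s/3 \<le> sin s"
proof -
  have "\<bar>sin s - (\<Sum>m<3. sin_coeff m * s ^ m)\<bar> \<le> inverse (fact 3) * \<bar>s\<bar> ^ 3"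
    by (rule Maclaurin_sin_bound)
  moreover have "(\<Sum>m<3. sin_coeff m * s ^ m) = s"
    by (simp add: numeral_3_eq_3 sin_coeff_def)
  moreover have "fact 3 = (6::real)" by (simp add: numeral_3_eq_3)
  ultimately have "s - s^3/6 \<le> sin s" using assms by (simp add: abs_if split: if_splits)
  moreover have "s^2 \<le> 4" using assms pi_less_4
  proof -
    have "s \<le> 2" using assms pi_less_4 by linarith
    then have "s * s \<le> 2 * 2" using assms by (intro mult_mono) auto
    then show ?thesis by (simp add: power2_eq_square)
  qed
  then have "s^3 \<le> 4 * s" using assms by (simp add: power3_eq_cube power2_eq_square mult_right_mono)
  ultimately show ?thesis by linarith
qed

lemma norm_one_minus_cis:
  fixes t :: real assumes "\<bar>t\<bar> \<le> pi" shows "\<bar>t\<bar>/3 \<le> cmod (1 - cis t)"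
proof -
  have "(cmod (1 - cis t))^2 = (1 - cos t)^2 + (sin t)^2"
    by (simp add: cmod_def)
  also have "\<dots> = 2 - 2 * cos t" by (simp add: power2_eq_square algebra_simps sin_squared_eq)
  also have "\<dots> = 4 * (sin (t/2))^2"
    using cos_double_sin[of "t/2"] by simp
  finally have e: "(cmod (1 - cis t))^2 = (2 * \<bar>sin (t/2)\<bar>)^2" by (simp add: power2_eq_square)
  have "\<bar>sin (t/2)\<bar> = sin (\<bar>t\<bar>/2)" 
    using sin_ge_zero[of "\<bar>t\<bar>/2"] assms pi_gt_zero by (cases "t \<ge> 0") auto
  moreover have "\<bar>t\<bar>/2/3 \<le> sin (\<bar>t\<bar>/2)" by (rule sin_lower) (use assms in auto)
  ultimately have "\<bar>t\<bar>/3 \<le> 2 * \<bar>sin (t/2)\<bar>" by simp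
  also have "\<dots> = cmod (1 - cis t)" using power2_eq_imp_eq[OF e] by simp
  finally show ?thesis .
qed

lemma sum_lessThan_add_split:
  fixes a b :: nat shows "(\<Sum>x<a+b. g x) = (\<Sum>x<a. g x) + (\<Sum>y<b. g (a + y))"
  by (induct b) (simp_all add: ac_simps)

lemma block_sum:
  fixes P M :: nat shows "(\<Sum>x<P*M. g x) = (\<Sum>t<M. \<Sum>y<P. g (P*t + y))"
proof (induct M)
  case 0 then show ?case by simp
next
  case (Suc M)
  have "(\<Sum>x<P*Suc M. g x) = (\<Sum>x<P*M + P. g x)" by (simp add: ac_simps)
  also have "\<dots> = (\<Sum>x<P*M. g x) + (\<Sum>y<P. g (P*M + y))" by (rule sum_lessThan_add_split)
  finally show ?case using Suc by simp
qed

lemma bitfun_shift: "bitfun i (2^i * (2*t) + y) = bitfun i y"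
proof -
  have "(2^i * (2*t) + y) div 2^i = 2*t + y div 2^i" by simp
  then show ?thesis unfolding bitfun_def by simp
qed

lemma bitfun_low: "y < 2^i \<Longrightarrow> bitfun i y = 1"
  unfolding bitfun_def by simp

lemma bitfun_high: "y < 2^i \<Longrightarrow> bitfun i (2^i + y) = -1"
proof -
  assume "y < 2^i"
  then have "(2^i + y) div 2^i = 1" by simp
  then show ?thesis unfolding bitfun_def by simp
qed

lemma fourier_formula:
  fixes w :: complex
  assumes L: "L = (2::nat)^i" and w: "w = cis (-2*pi*real \<alpha> / real (2*L*M))"
  shows "fourier (2*L*M) (bitfun i) \<alpha> =
    (1 / of_nat (2*L*M)) * ((\<Sum>t<M. (w^(2*L))^t) * ((1 - w^L) * (\<Sum>y<L. w^y)))"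
proof -
  have ex: "exp (- 2 * of_real pi * \<i> * of_nat \<alpha> * of_nat x / of_nat (2*L*M)) = w^x" for x
  proof -
    have "w^x = cis (real x * (-2*pi*real \<alpha> / real (2*L*M)))" unfolding w by (rule Complex.DeMoivre)
    also have "\<dots> = exp (\<i> * complex_of_real (real x * (-2*pi*real \<alpha> / real (2*L*M))))"
      by (rule cis_conv_exp)
    also have "\<i> * complex_of_real (real x * (-2*pi*real \<alpha> / real (2*L*M)))
       = - 2 * of_real pi * \<i> * of_nat \<alpha> * of_nat x / of_nat (2*L*M)"
      by (simp add: field_simps)
    finally show ?thesis by simp
  qed
  have "(\<Sum>x<2*L*M. bitfun i x * w^x) = (\<Sum>t<M. \<Sum>y<2*L. bitfun i ((2*L)*t + y) * w^((2*L)*t + y))"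
    by (rule block_sum)
  also have "\<dots> = (\<Sum>t<M. (w^(2*L))^t * (\<Sum>y<2*L. bitfun i y * w^y))"
  proof (rule sum.cong[OF refl])
    fix t
    have "bitfun i ((2*L)*t + y) = bitfun i y" for y
      using bitfun_shift[of i t y] L by (simp add: ac_simps)
    moreover have "w^((2*L)*t + y) = (w^(2*L))^t * w^y" for y
      by (simp only: power_add power_mult)
    ultimately show "(\<Sum>y<2*L. bitfun i ((2*L)*t + y) * w^((2*L)*t + y)) = (w^(2*L))^t * (\<Sum>y<2*L. bitfun i y * w^y)"
      by (simp only: sum_distrib_left ac_simps)
  qed
  also have "\<dots> = (\<Sum>t<M. (w^(2*L))^t) * (\<Sum>y<2*L. bitfun i y * w^y)"
    by (simp add: sum_distrib_right)
  also have "(\<Sum>y<2*L. bitfun i y * w^y) = (\<Sum>y<L*2. bitfun i y * w^y)" by (simp add: ac_simps)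
  also have "\<dots> = (\<Sum>t<2. \<Sum>y<L. bitfun i (L*t+y) * w^(L*t+y))" by (rule block_sum)
  also have "\<dots> = (\<Sum>y<L. bitfun i y * w^y) + (\<Sum>y<L. bitfun i (L*1+y) * w^(L*1+y))"
    by (simp add: numeral_2_eq_2)
  also have "\<dots> = (1 - w^L) * (\<Sum>y<L. w^y)"
  proof -
    have a: "(\<Sum>y<L. bitfun i y * w^y) = (\<Sum>y<L. w^y)"
      by (rule sum.cong[OF refl]) (simp add: bitfun_low L)
    have b: "(\<Sum>y<L. bitfun i (L*1+y) * w^(L*1+y)) = - (w^L * (\<Sum>y<L. w^y))"
      unfolding sum_distrib_left sum_negf[symmetric]
      by (rule sum.cong[OF refl]) (simp add: bitfun_high L power_add)
    show ?thesis unfolding a b by (simp add: algebra_simps)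
  qed
  finally have S: "(\<Sum>x<2*L*M. bitfun i x * w^x) = (\<Sum>t<M. (w^(2*L))^t) * ((1 - w^L) * (\<Sum>y<L. w^y))" .
  show ?thesis unfolding fourier_def ex S[symmetric] by simp
qed

lemma le_pi_third: fixes x :: real assumes "0 \<le> x" shows "x \<le> pi * x / 3"
proof -
  have "3 * x \<le> pi * x" using pi_gt3 assms by (intro mult_right_mono) auto
  then show ?thesis by simp
qed

lemma cis_minus_pi: "cis (- pi) = -1"
  by (simp add: complex_eq_iff)

theorem lemma6p3:
  shows "\<exists>c::real. \<forall>k i \<alpha>::nat. i < k \<longrightarrow> \<alpha> < 2 ^ k \<longrightarrow>
     ((\<not> (\<exists>m. odd m \<and> \<alpha> = m * 2 ^ (k - i - 1))) \<longrightarrow> fourier (2 ^ k) (bitfun i) \<alpha> = 0) \<and>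
     ((\<exists>m. odd m \<and> \<alpha> = m * 2 ^ (k - i - 1)) \<longrightarrow>
        norm (fourier (2 ^ k) (bitfun i) \<alpha>) \<le> c * 2 ^ (k - i) / absN (2 ^ k) (real \<alpha>))"
proof (intro exI[of _ 1] allI impI conjI)
  fix k i \<alpha> :: nat
  assume ik: "i < k" and \<alpha>k: "\<alpha> < 2 ^ k"
  define L :: nat where "L = 2^i"
  define M :: nat where "M = 2^(k-i-1)"
  define w :: complex where "w = cis (-2*pi*real \<alpha> / real (2*L*M))"
  have Lpos: "0 < L" and Mpos: "0 < M" by (simp_all add: L_def M_def)
  have N: "(2::nat)^k = 2*L*M"
  proof -
    have "k = Suc (i + (k-i-1))" using ik by simp
    then have "(2::nat)^k = 2^Suc (i + (k-i-1))" by simp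
    then show ?thesis unfolding L_def M_def by (simp add: power_add)
  qed
  have F: "fourier (2^k) (bitfun i) \<alpha> =
    (1 / of_nat (2*L*M)) * ((\<Sum>t<M. (w^(2*L))^t) * ((1 - w^L) * (\<Sum>y<L. w^y)))"
    unfolding N by (rule fourier_formula[OF L_def w_def])
  have wN: "w^(2*L*M) = 1"
  proof -
    have "w^(2*L*M) = cis (real (2*L*M) * (-2*pi*real \<alpha> / real (2*L*M)))"
      unfolding w_def by (rule Complex.DeMoivre)
    also have "real (2*L*M) * (-2*pi*real \<alpha> / real (2*L*M)) = 2 * pi * (- real \<alpha>)"
      using Lpos Mpos by (simp add: field_simps)
    also have "cis (2 * pi * (- real \<alpha>)) = 1" by (rule cis_multiple_2pi) simp
    finally show ?thesis .
  qed
  have wL: "w^L = (-1)^m" if "\<alpha> = m * M" for m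
  proof -
    have "w^L = cis (real L * (-2*pi*real \<alpha> / real (2*L*M)))"
      unfolding w_def by (rule Complex.DeMoivre)
    also have "real L * (-2*pi*real \<alpha> / real (2*L*M)) = real m * (- pi)"
      using Lpos Mpos that by (simp add: field_simps)
    also have "cis (real m * (- pi)) = (cis (-pi))^m" by (rule Complex.DeMoivre[symmetric])
    finally show ?thesis by (simp add: cis_minus_pi)
  qed
  have G2a: "(\<Sum>t<M. (w^(2*L))^t) = of_nat M" if dv: "M dvd \<alpha>"
  proof -
    obtain m where m: "\<alpha> = m * M" using dv by (metis dvd_div_mult_self)
    have "w^(2*L) = ((w^L))^2" by (simp add: power_mult[symmetric] ac_simps)
    also have "\<dots> = 1" using wL[OF m] by (simp add: power_mult[symmetric] power_mult_distrib ac_simps)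
    finally show ?thesis by simp
  qed
  have G2b: "(\<Sum>t<M. (w^(2*L))^t) = 0" if "\<not> M dvd \<alpha>"
  proof -
    have ne: "w^(2*L) \<noteq> 1"
    proof
      assume h: "w^(2*L) = 1"
      have "w^(2*L) = cis (real (2*L) * (-2*pi*real \<alpha> / real (2*L*M)))"
        unfolding w_def by (rule Complex.DeMoivre)
      also have "real (2*L) * (-2*pi*real \<alpha> / real (2*L*M)) = - real \<alpha> / real M * 2 * pi"
        using Lpos Mpos by (simp add: field_simps)
      finally have "cos (- real \<alpha> / real M * 2 * pi) = 1" using h
        by (metis Re_complex_of_real cis.sel(1) of_real_1)
      then obtain n :: int where n: "- real \<alpha> / real M * 2 * pi = of_int n * 2 * pi"
        using cos_one_2pi_int by blast
      then have "(- real \<alpha> / real M) * (2*pi) = of_int n * (2*pi)" by (simp only: mult.assoc)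
      then have "- real \<alpha> / real M = of_int n" using pi_gt_zero by (simp only: mult_right_cancel)
      then have "real \<alpha> = of_int (- n) * real M" using Mpos by (simp add: field_simps)
      then have "int \<alpha> = (- n) * int M"
        by (metis of_int_eq_iff of_int_mult of_int_of_nat_eq)
      then have "int M dvd int \<alpha>" by simp
      then show False using that by simp
    qed
    have "(w^(2*L))^M = 1" using wN by (simp add: power_mult[symmetric])
    then show ?thesis using ne by (simp add: sum_gp_strict)
  qed
  show "fourier (2 ^ k) (bitfun i) \<alpha> = 0" if nex: "\<not> (\<exists>m. odd m \<and> \<alpha> = m * 2 ^ (k - i - 1))"
  proof (cases "M dvd \<alpha>")
    case True
    obtain m where m: "\<alpha> = m * M" using True by (metis dvd_div_mult_self)
    have "even m" using nex m unfolding M_def by blast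
    then have "w^L = 1" using wL[OF m] by simp
    then show ?thesis unfolding F by simp
  next
    case False
    then show ?thesis unfolding F using G2b by simp
  qed
  show "norm (fourier (2 ^ k) (bitfun i) \<alpha>) \<le> 1 * 2 ^ (k - i) / absN (2 ^ k) (real \<alpha>)"
    if ex: "\<exists>m. odd m \<and> \<alpha> = m * 2 ^ (k - i - 1)"
  proof -
    obtain m where modd: "odd m" and m: "\<alpha> = m * M" using ex unfolding M_def by blast
    have wLm: "w^L = -1" using wL[OF m] modd by simp
    have w1: "w \<noteq> 1" using wLm by auto
    have G1: "(\<Sum>y<L. w^y) = 2 / (1 - w)" using w1 wLm by (simp add: sum_gp_strict)
    have G2: "(\<Sum>t<M. (w^(2*L))^t) = of_nat M" using G2a m by simp
    have Fe: "fourier (2^k) (bitfun i) \<alpha> = 2 / (of_nat L * (1 - w))"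
      unfolding F G1 G2 wLm using Mpos Lpos w1 by (simp add: field_simps)
    have nF: "norm (fourier (2^k) (bitfun i) \<alpha>) = 2 / (real L * cmod (1 - w))"
      unfolding Fe by (simp add: norm_divide norm_mult)
    have mlt: "m < 2*L" using \<alpha>k m N Mpos by (metis mult_less_cancel2 mult.commute)
    have m1: "1 \<le> m" using modd by (cases m) auto
    have wm: "w = cis (- pi * real m / real L)"
      unfolding w_def m using Lpos Mpos by (simp add: field_simps)
    define d where "d = (if m \<le> L then m else 2*L - m)"
    have d1: "1 \<le> d" using m1 mlt d_def by auto
    have dL: "real d / real L \<le> cmod (1 - w)"
    proof (cases "m \<le> L")
      case True
      have "\<bar>- pi * real m / real L\<bar> \<le> pi" using True Lpos
        by (simp add: abs_mult field_simps mult_left_mono)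
      then have "\<bar>- pi * real m / real L\<bar> / 3 \<le> cmod (1 - w)"
        unfolding wm by (rule norm_one_minus_cis)
      moreover have "\<bar>- pi * real m / real L\<bar> = pi * (real m / real L)" using Lpos by (simp add: abs_mult)
      moreover have "real m / real L \<le> pi * (real m / real L) / 3"
        by (rule le_pi_third) simp
      ultimately show ?thesis using True d_def by simp
    next
      case False
      have rd: "real (2*L - m) = 2 * real L - real m" using mlt by (simp add: of_nat_diff)
      have "w = cis (pi * real (2*L - m) / real L)"
      proof -
        have "cis (pi * real (2*L - m) / real L) = cis (- pi * real m / real L + 2 * pi)"
          using Lpos rd by (simp add: field_simps)
        also have "\<dots> = cis (- pi * real m / real L) * cis (2*pi)" by (simp only: cis_mult)
        finally show ?thesis using wm by simp
      qed
      moreover have "\<bar>pi * real (2*L - m) / real L\<bar> \<le> pi" using False Lpos rd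
        by (simp add: abs_mult field_simps mult_left_mono)
      ultimately have "\<bar>pi * real (2*L - m) / real L\<bar> / 3 \<le> cmod (1 - w)"
        using norm_one_minus_cis by metis
      moreover have "\<bar>pi * real (2*L - m) / real L\<bar> = pi * (real (2*L - m) / real L)" using Lpos by (simp add: abs_mult)
      moreover have "real (2*L-m) / real L \<le> pi * (real (2*L-m) / real L) / 3"
        by (rule le_pi_third) simp
      ultimately show ?thesis using False d_def by simp
    qed
    define f where "f = (\<lambda>z::int. \<bar>real \<alpha> - real (2^k) * real_of_int z\<bar>)"
    have absN_eq: "absN (2^k) (real \<alpha>) = (INF z. f z)" unfolding absN_def f_def by simp
    have bdd: "bdd_below (range f)" unfolding f_def by (intro bdd_belowI[of _ 0]) auto
    have up: "absN (2^k) (real \<alpha>) \<le> real M * real d"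
    proof (cases "m \<le> L")
      case True
      have "absN (2^k) (real \<alpha>) \<le> f 0" unfolding absN_eq by (rule cINF_lower[OF bdd]) simp
      also have "f 0 = real M * real d" unfolding f_def d_def m using True by simp
      finally show ?thesis .
    next
      case False
      have "absN (2^k) (real \<alpha>) \<le> f 1" unfolding absN_eq by (rule cINF_lower[OF bdd]) simp
      also have "f 1 = \<bar>real m * real M - 2 * real L * real M\<bar>" unfolding f_def m N by simp
      also have "\<dots> = real M * (2 * real L - real m)" using mlt Mpos
        by (simp add: abs_if algebra_simps mult_left_mono)
      also have "\<dots> = real M * real d" unfolding d_def using False mlt by (simp add: of_nat_diff)
      finally show ?thesis .
    qed
    have apos: "1 \<le> absN (2^k) (real \<alpha>)"
      unfolding absN_eq
    proof (rule cINF_greatest)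
      fix z :: int
      have "1 \<le> \<alpha>" using m m1 Mpos by simp
      then have a1: "1 \<le> real \<alpha>" by simp
      have aN: "real \<alpha> + 1 \<le> real (2^k)" using \<alpha>k by (metis Suc_leI of_nat_Suc of_nat_le_iff add.commute)
      show "1 \<le> f z"
      proof (cases "z \<le> 0")
        case True
        have "real (2^k) * real_of_int z \<le> 0" using True by (simp add: mult_nonneg_nonpos)
        then show ?thesis unfolding f_def using a1 by simp
      next
        case False
        then have "1 \<le> real_of_int z" by simp
        then have pz: "real (2^k) * 1 \<le> real (2^k) * real_of_int z" by (intro mult_left_mono) auto
        have "1 \<le> real (2^k) * real_of_int z - real \<alpha>" using pz aN by linarith
        then show ?thesis unfolding f_def by linarith
      qed
    qed simp
    have two: "(2::real)^(k-i) = 2 * real M"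
    proof -
      have "k - i = Suc (k-i-1)" using ik by simp
      then have "(2::real)^(k-i) = 2 * 2^(k-i-1)" by (metis power_Suc)
      then show ?thesis unfolding M_def by simp
    qed
    have "norm (fourier (2^k) (bitfun i) \<alpha>) = 2 / (real L * cmod (1 - w))" by (rule nF)
    also have "\<dots> \<le> 2 / real d"
    proof (rule divide_left_mono)
      show "real d \<le> real L * cmod (1 - w)" using dL Lpos by (simp add: field_simps)
      show "0 < real L * cmod (1 - w) * real d" using d1 Lpos w1 by simp
    qed simp
    also have "\<dots> = 2 * real M / (real M * real d)" using Mpos by simp
    also have "\<dots> \<le> 2 * real M / absN (2^k) (real \<alpha>)"
      by (rule divide_left_mono) (use up apos Mpos in auto)
    finally show ?thesis using two by simp
  qed
qed

end
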